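(* Assume (H1), (H2), fix $\lambda>f'(0)$, and let $s_*$ be a $\lambda$-conjugate point. Let $p(\cdot;\lambda)$, $q(\cdot;\lambda)$ be solutions of $q'=B(x,\lambda)q$ decaying as $x\to-\infty$ such that $p(s_*;\lambda),q(s_*;\lambda)$ form a basis of $\mathbb E^u_-(s_*,\lambda)$ and $p(s_*;\lambda)\in\ell_*^{sand}$. Then there is $\alpha\in\mathbb R$ such that $p(s_*;\lambda)=(0,\ p_2(s_*;\lambda),\ p_3(s_*;\lambda),\ 0)^T$ and $q(s_*;\lambda)=(\alpha p_2(s_*;\lambda),\ q_2(s_*;\lambda),\ q_3(s_*;\lambda),\ \alpha p_3(s_*;\lambda))^T$.
   Context: Fix real $\nu,\mu$ and $f(u)=\nu u^2-u^3-\mu u$. (H1): $\varphi$ is a smooth stationary solution of $u_t=-(1+\partial_x^2)^2u+f(u)$ with $\varphi\to0$ at $\pm\infty$. (H2): $f'(0)<0$. $B(x,\lambda)=\begin{pmatrix}0&0&0&1\\0&0&1&-2\\-\lambda-1+f'(\varphi(x))&0&0&0\\0&1&0&0\end{pmatrix}$. $\mathbb E^u_-(x,\lambda)$ is the set of values $q(x)$ of solutions of $q'=B(y,\lambda)q$ with $q(y)\to0$ as $y\to-\infty$; it is Lagrangian for $\omega(u,v)=\langle u,Jv\rangle$, $J=\begin{pmatrix}0&I_2\\-I_2&0\end{pmatrix}$. $\ell_*^{sand}=\{q\in\mathbb R^4:q_1=q_4=0\}$; $s$ is a $\lambda$-conjugate point if $\mathbb E^u_-(s,\lambda)\cap\ell_*^{sand}\neq\{0\}$.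 *)

theory Defs
  imports "HOL-Analysis.Analysis"
begin

definition fnl :: "real \<Rightarrow> real \<Rightarrow> real \<Rightarrow> real" where
  "fnl \<nu> \<mu> u = \<nu> * u\<^sup>2 - u ^ 3 - \<mu> * u"

definition smooth_fun :: "(real \<Rightarrow> real) \<Rightarrow> bool" where
  "smooth_fun g \<longleftrightarrow> (\<forall>n. (deriv ^^ n) g differentiable_on UNIV)"

text \<open>(H1): phi is a smooth stationary solution of u_t = -(1+d_x^2)^2 u + f(u),
  i.e. -(phi'''' + 2 phi'' + phi) + f(phi) = 0, with phi -> 0 at +-infinity.\<close>
definition H1 :: "real \<Rightarrow> real \<Rightarrow> (real \<Rightarrow> real) \<Rightarrow> bool" where
  "H1 \<nu> \<mu> \<phi> \<longleftrightarrow> smooth_fun \<phi> \<and>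
     (\<forall>x. - ((deriv ^^ 4) \<phi> x + 2 * (deriv ^^ 2) \<phi> x + \<phi> x) + fnl \<nu> \<mu> (\<phi> x) = 0) \<and>
     (\<phi> \<longlongrightarrow> 0) at_top \<and> (\<phi> \<longlongrightarrow> 0) at_bot"

definition H2 :: "real \<Rightarrow> real \<Rightarrow> bool" where
  "H2 \<nu> \<mu> \<longleftrightarrow> deriv (fnl \<nu> \<mu>) 0 < 0"

text \<open>The matrix B(x,lambda); components indexed 1..4 (index 4 of type 4 is the 4th one).\<close>
definition Bmat :: "real \<Rightarrow> real \<Rightarrow> (real \<Rightarrow> real) \<Rightarrow> real \<Rightarrow> real \<Rightarrow> real^4^4" where
  "Bmat \<nu> \<mu> \<phi> x lam = vector [
      vector [0, 0, 0, 1],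
      vector [0, 0, 1, -2],
      vector [- lam - 1 + deriv (fnl \<nu> \<mu>) (\<phi> x), 0, 0, 0],
      vector [0, 1, 0, 0]]"

definition decaying_sol :: "real \<Rightarrow> real \<Rightarrow> (real \<Rightarrow> real) \<Rightarrow> real \<Rightarrow> (real \<Rightarrow> real^4) \<Rightarrow> bool" where
  "decaying_sol \<nu> \<mu> \<phi> lam q \<longleftrightarrow>
     (\<forall>y. (q has_vector_derivative (Bmat \<nu> \<mu> \<phi> y lam *v q y)) (at y)) \<and>
     (q \<longlongrightarrow> 0) at_bot"

definition Eu :: "real \<Rightarrow> real \<Rightarrow> (real \<Rightarrow> real) \<Rightarrow> real \<Rightarrow> real \<Rightarrow> (real^4) set" where
  "Eu \<nu> \<mu> \<phi> x lam = {q x | q. decaying_sol \<nu> \<mu> \<phi> lam q}"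

definition ell_sand :: "(real^4) set" where
  "ell_sand = {q. q $ 1 = 0 \<and> q $ 4 = 0}"

definition conjugate_point :: "real \<Rightarrow> real \<Rightarrow> (real \<Rightarrow> real) \<Rightarrow> real \<Rightarrow> real \<Rightarrow> bool" where
  "conjugate_point \<nu> \<mu> \<phi> lam s \<longleftrightarrow> Eu \<nu> \<mu> \<phi> s lam \<inter> ell_sand \<noteq> {0}"

end

theory Submission
  imports Defs
begin

lemma comp_deriv:
  fixes f :: "real \<Rightarrow> real^4"
  assumes "(f has_vector_derivative f') (at y)"
  shows "((\<lambda>x. f x $ i) has_real_derivative f' $ i) (at y)"
proof -
  have "((\<lambda>x. f x $ i) has_derivative (\<lambda>h. (h *\<^sub>R f') $ i)) (at y)"
    using bounded_linear.has_derivative[OF bounded_linear_vec_nth assms[unfolded has_vector_derivative_def]] .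
  moreover have "(\<lambda>h. h * f' $ i) = (*) (f' $ i)" by (auto simp: mult.commute)
  ultimately show ?thesis unfolding has_field_derivative_def by simp
qed

lemma vector_4:
 "(vector [x,y,z,w] ::('a::zero)^4)$1 = x"
 "(vector [x,y,z,w] ::('a::zero)^4)$2 = y"
 "(vector [x,y,z,w] ::('a::zero)^4)$3 = z"
 "(vector [x,y,z,w] ::('a::zero)^4)$4 = w"
  unfolding vector_def by simp_all

lemma Bcomp:
  "(Bmat \<nu> \<mu> \<phi> x lam *v v) $ 1 = v $ 4"
  "(Bmat \<nu> \<mu> \<phi> x lam *v v) $ 2 = v $ 3 - 2 * v $ 4"
  "(Bmat \<nu> \<mu> \<phi> x lam *v v) $ 3 = (- lam - 1 + deriv (fnl \<nu> \<mu>) (\<phi> x)) * v $ 1"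
  "(Bmat \<nu> \<mu> \<phi> x lam *v v) $ 4 = v $ 2"
  by (simp_all add: Bmat_def matrix_vector_mult_def sum_4 vector_4)

lemma omega_zero:
  assumes p: "decaying_sol \<nu> \<mu> \<phi> lam p" and q: "decaying_sol \<nu> \<mu> \<phi> lam q"
  shows "p s $ 1 * q s $ 3 + p s $ 2 * q s $ 4 - p s $ 3 * q s $ 1 - p s $ 4 * q s $ 2 = 0"
proof -
  define w where "w = (\<lambda>x. p x $ 1 * q x $ 3 + p x $ 2 * q x $ 4 - p x $ 3 * q x $ 1 - p x $ 4 * q x $ 2)"
  have d: "(w has_real_derivative 0) (at y)" for y
  proof -
    note dp = comp_deriv[OF p[unfolded decaying_sol_def, THEN conjunct1, rule_format, of y]]
    note dq = comp_deriv[OF q[unfolded decaying_sol_def, THEN conjunct1, rule_format, of y]]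
    let ?P = "Bmat \<nu> \<mu> \<phi> y lam *v p y" and ?Q = "Bmat \<nu> \<mu> \<phi> y lam *v q y"
    have "(w has_real_derivative
      (p y $ 1 * ?Q $ 3 + ?P $ 1 * q y $ 3 + (p y $ 2 * ?Q $ 4 + ?P $ 2 * q y $ 4)
     - (p y $ 3 * ?Q $ 1 + ?P $ 3 * q y $ 1) - (p y $ 4 * ?Q $ 2 + ?P $ 4 * q y $ 2))) (at y)"
      unfolding w_def
      by (intro DERIV_diff DERIV_add DERIV_mult' dp dq)
    then show ?thesis by (simp add: Bcomp algebra_simps)
  qed
  have const: "w x = w s" for x using DERIV_isconst_all[of w] d by blast
  have pl: "((\<lambda>x. p x $ i) \<longlongrightarrow> 0) at_bot" for i
    using tendsto_vec_nth[OF p[unfolded decaying_sol_def, THEN conjunct2]] by simp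
  have ql: "((\<lambda>x. q x $ i) \<longlongrightarrow> 0) at_bot" for i
    using tendsto_vec_nth[OF q[unfolded decaying_sol_def, THEN conjunct2]] by simp
  have "(w \<longlongrightarrow> 0) at_bot"
    unfolding w_def using tendsto_diff[OF tendsto_diff[OF tendsto_add[OF tendsto_mult[OF pl ql] tendsto_mult[OF pl ql]] tendsto_mult[OF pl ql]] tendsto_mult[OF pl ql]]
    by simp
  moreover have "\<forall>x. w s = w x" by (metis const)
  then have "\<forall>\<^sub>F x in at_bot. w s = w x" by (rule always_eventually)
  then have "(w \<longlongrightarrow> w s) at_bot" by (rule Lim_transform_eventually[OF tendsto_const])
  ultimately have "w s = 0" using tendsto_unique[OF trivial_limit_at_bot_linorder] by blast
  then show ?thesis by (simp add: w_def)
qed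

theorem lemma3:
  fixes \<nu> \<mu> lam s :: real and \<phi> :: "real \<Rightarrow> real" and p q :: "real \<Rightarrow> real^4"
  assumes "H1 \<nu> \<mu> \<phi>" and "H2 \<nu> \<mu>"
    and "lam > deriv (fnl \<nu> \<mu>) 0"
    and "conjugate_point \<nu> \<mu> \<phi> lam s"
    and "decaying_sol \<nu> \<mu> \<phi> lam p" and "decaying_sol \<nu> \<mu> \<phi> lam q"
    and "p s \<noteq> q s" and "independent {p s, q s}"
    and "span {p s, q s} = Eu \<nu> \<mu> \<phi> s lam"
    and "p s \<in> ell_sand"
  shows "\<exists>\<alpha>::real. p s = vector [0, p s $ 2, p s $ 3, 0] \<and>
                    q s = vector [\<alpha> * p s $ 2, q s $ 2, q s $ 3, \<alpha> * p s $ 3]"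
proof -
  have w: "p s $ 1 * q s $ 3 + p s $ 2 * q s $ 4 - p s $ 3 * q s $ 1 - p s $ 4 * q s $ 2 = 0"
    using omega_zero[OF assms(5,6)] .
  have z1: "p s $ 1 = 0" and z4: "p s $ 4 = 0" using assms(10) by (auto simp: ell_sand_def)
  have nz: "p s \<noteq> 0"
  proof
    assume h: "p s = 0"
    have "dependent {p s, q s}" by (rule dependent_zero) (simp add: h)
    with assms(8) show False by simp
  qed
  have rel: "p s $ 2 * q s $ 4 = p s $ 3 * q s $ 1" using w z1 z4 by simp
  have nz23: "p s $ 2 \<noteq> 0 \<or> p s $ 3 \<noteq> 0"
    using nz z1 z4 by (auto simp: vec_eq_iff forall_4)
  obtain \<alpha> where a1: "q s $ 1 = \<alpha> * p s $ 2" and a4: "q s $ 4 = \<alpha> * p s $ 3"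
  proof (cases "p s $ 2 = 0")
    case True
    then have "p s $ 3 \<noteq> 0" using nz23 by simp
    then show ?thesis using rel True
      by (intro that[of "q s $ 4 / p s $ 3"]) (auto simp: field_simps)
  next
    case False
    then show ?thesis using rel
      by (intro that[of "q s $ 1 / p s $ 2"]) (auto simp: field_simps)
  qed
  show ?thesis
    apply (rule exI[of _ \<alpha>])
    using z1 z4 a1 a4 by (simp add: vec_eq_iff forall_4 vector_4)
qed

end
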